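(* Let $A$ be a dense subspace of a topological space $X$. If $C(A)$ has the countable sup property, then $C(X)$ has the countable sup property.
   Context: $C(Y)$ denotes the vector lattice of all real-valued continuous functions on a space $Y$ with the pointwise order. A vector lattice has the countable sup property if every nonempty subset possessing a supremum contains a countable subset with the same supremum. *)

theory Defs
  imports "HOL-Analysis.Analysis"
begin

text \<open>Functions are represented extensionally (value 0 outside the carrier),
  so that the pointwise order on functions is the pointwise order on X.\<close>
definition Cfun :: "'a topology \<Rightarrow> ('a \<Rightarrow> real) set" where
  "Cfun X = {f. continuous_map X euclideanreal f \<and> (\<forall>x. x \<notin> topspace X \<longrightarrow> f x = 0)}"

definition is_sup_in :: "('a \<Rightarrow> real) set \<Rightarrow> ('a \<Rightarrow> real) set \<Rightarrow> ('a \<Rightarrow> real) \<Rightarrow> bool" where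
  "is_sup_in V S s \<longleftrightarrow> s \<in> V \<and> (\<forall>g\<in>S. g \<le> s) \<and> (\<forall>h\<in>V. (\<forall>g\<in>S. g \<le> h) \<longrightarrow> s \<le> h)"

definition countable_sup_property :: "('a \<Rightarrow> real) set \<Rightarrow> bool" where
  "countable_sup_property V \<longleftrightarrow>
     (\<forall>S s. S \<subseteq> V \<and> S \<noteq> {} \<and> is_sup_in V S s \<longrightarrow>
        (\<exists>T. T \<subseteq> S \<and> countable T \<and> is_sup_in V T s))"

end

theory Submission
  imports Defs
begin
lemma maximal_disjoint:
  "\<exists>M\<subseteq>P. pairwise disjnt M \<and> (\<forall>Z\<in>P. (\<forall>W\<in>M. disjnt Z W) \<longrightarrow> Z \<in> M)"
proof -
  let ?A = "{M. M \<subseteq> P \<and> pairwise disjnt M}"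
  have "\<exists>M\<in>?A. \<forall>X\<in>?A. M \<subseteq> X \<longrightarrow> X = M"
  proof (rule subset_Zorn')
    fix C assume C: "subset.chain ?A C"
    show "\<Union>C \<in> ?A"
    proof -
      have "\<Union>C \<subseteq> P" using C by (auto simp: subset.chain_def)
      moreover have "pairwise disjnt (\<Union>C)"
        unfolding pairwise_def
      proof (intro ballI impI)
        fix x y assume "x \<in> \<Union>C" "y \<in> \<Union>C" "x \<noteq> y"
        then obtain M1 M2 where "M1 \<in> C" "M2 \<in> C" "x \<in> M1" "y \<in> M2" by auto
        have o: "M1 \<subseteq> M2 \<or> M2 \<subseteq> M1" using C \<open>M1 \<in> C\<close> \<open>M2 \<in> C\<close>
          unfolding subset.chain_def by blast
        have "M1 \<in> ?A" "M2 \<in> ?A" using C \<open>M1 \<in> C\<close> \<open>M2 \<in> C\<close>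
          unfolding subset.chain_def by blast+
        then have p1: "pairwise disjnt M1" and p2: "pairwise disjnt M2" by auto
        show "disjnt x y"
        proof (cases "M1 \<subseteq> M2")
          case True then show ?thesis using p2 \<open>x \<in> M1\<close> \<open>y \<in> M2\<close> \<open>x \<noteq> y\<close>
            unfolding pairwise_def by blast
        next
          case False then have "M2 \<subseteq> M1" using o by blast
          then show ?thesis using p1 \<open>x \<in> M1\<close> \<open>y \<in> M2\<close> \<open>x \<noteq> y\<close>
            unfolding pairwise_def by blast
        qed
      qed
      ultimately show ?thesis by simp
    qed
  qed
  then obtain M where M0: "M \<in> ?A" and max: "\<forall>X\<in>?A. M \<subseteq> X \<longrightarrow> X = M"
    by (rule bexE)
  from M0 have M: "M \<subseteq> P" "pairwise disjnt M" by auto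
  have "Z \<in> M" if "Z \<in> P" "\<forall>W\<in>M. disjnt Z W" for Z
  proof -
    have "insert Z M \<in> ?A" using M that
      by (auto simp: pairwise_def disjnt_sym)
    then have "insert Z M = M" using max by (meson subset_insertI)
    then show ?thesis by blast
  qed
  with M show ?thesis by blast
qed

definition pos :: "'a topology \<Rightarrow> ('a \<Rightarrow> real) \<Rightarrow> 'a set" where
  "pos Y f = {x \<in> topspace Y. 0 < f x}"

definition cccpos :: "'a topology \<Rightarrow> bool" where
  "cccpos Y \<longleftrightarrow> (\<forall>F. (\<forall>Z\<in>F. Z \<noteq> {} \<and> (\<exists>f. continuous_map Y euclideanreal f \<and> Z = pos Y f))
      \<and> pairwise disjnt F \<longrightarrow> countable F)"

lemma transfer_ccc:
  assumes "A \<subseteq> topspace X" "X closure_of A = topspace X" "cccpos (subtopology X A)"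
  shows "cccpos X"
  unfolding cccpos_def
proof (intro allI impI)
  fix F assume F: "(\<forall>Z\<in>F. Z \<noteq> {} \<and> (\<exists>f. continuous_map X euclideanreal f \<and> Z = pos X f)) \<and> pairwise disjnt F"
  have ne: "Z \<inter> A \<noteq> {}" if "Z \<in> F" for Z
  proof -
    obtain f where f: "continuous_map X euclideanreal f" "Z = pos X f" "Z \<noteq> {}" using F \<open>Z \<in> F\<close> by blast
    have "openin X Z" unfolding f(2) pos_def
      using openin_continuous_map_preimage[OF f(1), of "{0<..}"] by (simp add: Int_def conj_commute)
    moreover have "Z \<subseteq> topspace X" using f(2) by (auto simp: pos_def)
    ultimately show ?thesis using openin_Int_closure_of_eq_empty[of X Z A] assms(2) f(3) by auto
  qed
  let ?G = "(\<lambda>Z. Z \<inter> A) ` F"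
  have inj: "inj_on (\<lambda>Z. Z \<inter> A) F"
  proof (rule inj_onI)
    fix Z W assume "Z \<in> F" "W \<in> F" "Z \<inter> A = W \<inter> A"
    show "Z = W"
    proof (rule ccontr)
      assume "Z \<noteq> W"
      then have "Z \<inter> W = {}" using F \<open>Z \<in> F\<close> \<open>W \<in> F\<close> by (auto simp: pairwise_def disjnt_def)
      then have "Z \<inter> A = {}" using \<open>Z \<inter> A = W \<inter> A\<close> by blast
      then show False using ne[OF \<open>Z \<in> F\<close>] by blast
    qed
  qed
  have "countable ?G"
    using assms(3) unfolding cccpos_def
  proof (elim allE impE)
    show "(\<forall>Z\<in>?G. Z \<noteq> {} \<and> (\<exists>f. continuous_map (subtopology X A) euclideanreal f \<and> Z = pos (subtopology X A) f)) \<and> pairwise disjnt ?G"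
    proof (intro conjI ballI)
      fix Z assume "Z \<in> ?G"
      then obtain W where W: "W \<in> F" "Z = W \<inter> A" by blast
      then obtain f where f: "continuous_map X euclideanreal f" "W = pos X f" using F by blast
      show "Z \<noteq> {}" using ne W by blast
      show "\<exists>f. continuous_map (subtopology X A) euclideanreal f \<and> Z = pos (subtopology X A) f"
        using f W assms(1) by (intro exI[of _ f]) (auto simp: pos_def continuous_map_from_subtopology)
    next
      show "pairwise disjnt ?G" using F by (auto simp: pairwise_def disjnt_def)
    qed
  qed
  then show "countable F" using inj countable_image_inj_on by blast
qed

definition extz :: "'a topology \<Rightarrow> ('a \<Rightarrow> real) \<Rightarrow> 'a \<Rightarrow> real" where
  "extz Y f = (\<lambda>x. if x \<in> topspace Y then f x else 0)"

lemma extz_Cfun: "continuous_map Y euclideanreal f \<Longrightarrow> extz Y f \<in> Cfun Y"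
  unfolding Cfun_def extz_def
  by (auto intro: continuous_map_eq[of Y _ f])

lemma Cfun_out: "g \<in> Cfun Y \<Longrightarrow> x \<notin> topspace Y \<Longrightarrow> g x = 0"
  by (auto simp: Cfun_def)

lemma Cfun_cont: "g \<in> Cfun Y \<Longrightarrow> continuous_map Y euclideanreal g"
  by (auto simp: Cfun_def)

lemma csp_ccc:
  assumes csp: "countable_sup_property (Cfun Y)"
  shows "cccpos Y"
  unfolding cccpos_def
proof (intro allI impI)
  fix F assume F: "(\<forall>Z\<in>F. Z \<noteq> {} \<and> (\<exists>f. continuous_map Y euclideanreal f \<and> Z = pos Y f)) \<and> pairwise disjnt F"
  show "countable F"
  proof (rule ccontr)
    assume unc: "\<not> countable F"
    define U where "U = \<Union>F"
    have Utop: "U \<subseteq> topspace Y" using F by (auto simp: U_def pos_def)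
    define one where "one = extz Y (\<lambda>x. 1)"
    define S1 where "S1 = {g \<in> Cfun Y. (\<forall>x\<in>topspace Y. g x \<le> 1) \<and> (\<exists>Z\<in>F. \<forall>x\<in>topspace Y. x \<notin> Z \<longrightarrow> g x \<le> 0)}"
    define S2 where "S2 = {g \<in> Cfun Y. (\<forall>x\<in>topspace Y. g x \<le> 1) \<and> (\<forall>x\<in>U. g x \<le> 0)}"
    define S where "S = S1 \<union> S2"
    have one_C: "one \<in> Cfun Y" unfolding one_def by (rule extz_Cfun) simp
    have zero_S: "(\<lambda>x. 0) \<in> S"
      unfolding S_def S2_def Cfun_def by simp
    have SC: "S \<subseteq> Cfun Y" by (auto simp: S_def S1_def S2_def)
    have ub: "g \<le> one" if "g \<in> S" for g
    proof -
      have "g x \<le> one x" for x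
        using that Cfun_out[of g Y x] by (cases "x \<in> topspace Y") (auto simp: S_def S1_def S2_def one_def extz_def)
      then show ?thesis by (simp add: le_fun_def)
    qed
    have least: "one \<le> h" if hC: "h \<in> Cfun Y" and hub: "\<forall>g\<in>S. g \<le> h" for h
    proof -
      have hc: "continuous_map Y euclideanreal h" using hC by (rule Cfun_cont)
      have bump: "\<exists>w. w \<in> Cfun Y \<and> (\<forall>y\<in>topspace Y. w y \<le> 1) \<and> w x = 1
                 \<and> (\<forall>y\<in>topspace Y. h y \<ge> 1 \<longrightarrow> w y \<le> 0)"
        if "x \<in> topspace Y" "h x < 1" for x
      proof -
        define w where "w = extz Y (\<lambda>y. min 1 (max 0 ((1 - h y) / (1 - h x))))"
        have "continuous_map Y euclideanreal (\<lambda>y. min 1 (max 0 ((1 - h y) / (1 - h x))))"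
          using that hc by (intro continuous_intros) auto
        then have "w \<in> Cfun Y" unfolding w_def by (rule extz_Cfun)
        moreover have "w x = 1" using that by (simp add: w_def extz_def)
        moreover have "\<forall>y\<in>topspace Y. w y \<le> 1" by (simp add: w_def extz_def)
        moreover have "\<forall>y\<in>topspace Y. h y \<ge> 1 \<longrightarrow> w y \<le> 0"
          using that by (auto simp: w_def extz_def divide_le_0_iff)
        ultimately show ?thesis by blast
      qed
      have onU: "h x \<ge> 1" if xU: "x \<in> U" for x
      proof (rule ccontr)
        assume "\<not> h x \<ge> 1"
        then have hx: "h x < 1" by simp
        have xt: "x \<in> topspace Y" using xU Utop by blast
        obtain w where w: "w \<in> Cfun Y" "\<forall>y\<in>topspace Y. w y \<le> 1" "w x = 1"
          using bump[OF xt hx] by blast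
        obtain Z where Z: "Z \<in> F" "x \<in> Z" using xU U_def by blast
        obtain f where f: "continuous_map Y euclideanreal f" "Z = pos Y f" using F Z by blast
        have fx: "f x > 0" using Z f by (simp add: pos_def)
        define g where "g = extz Y (\<lambda>y. w y * min 1 (max 0 (f y / f x)))"
        have "continuous_map Y euclideanreal (\<lambda>y. w y * min 1 (max 0 (f y / f x)))"
          using Cfun_cont[OF w(1)] f(1) fx by (intro continuous_intros) auto
        then have gC: "g \<in> Cfun Y" unfolding g_def by (rule extz_Cfun)
        have "\<forall>y\<in>topspace Y. g y \<le> 1"
        proof
          fix y assume y: "y \<in> topspace Y"
          have "w y * min 1 (max 0 (f y / f x)) \<le> 1 * 1"
          proof (cases "w y \<ge> 0")
            case True then show ?thesis using w(2) y by (intro mult_mono) auto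
          next
            case False then have "w y * min 1 (max 0 (f y / f x)) \<le> 0"
              by (intro mult_nonpos_nonneg) auto
            then show ?thesis by simp
          qed
          then show "g y \<le> 1" using y by (simp add: g_def extz_def)
        qed
        moreover have "\<forall>y\<in>topspace Y. y \<notin> Z \<longrightarrow> g y \<le> 0"
          using f fx by (auto simp: g_def extz_def pos_def divide_le_0_iff)
        ultimately have "g \<in> S" using gC Z unfolding S_def S1_def by blast
        then have "g x \<le> h x" using hub by (auto simp: le_fun_def)
        moreover have "g x = 1" using xt fx w(3) by (simp add: g_def extz_def)
        ultimately show False using hx by simp
      qed
      have "one x \<le> h x" for x
      proof (cases "x \<in> topspace Y")
        case False then show ?thesis using Cfun_out[OF hC False] by (simp add: one_def extz_def)
      next
        case xt: True
        show ?thesis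
        proof (rule ccontr)
          assume "\<not> one x \<le> h x"
          then have hx: "h x < 1" using xt by (simp add: one_def extz_def)
          obtain w where w: "w \<in> Cfun Y" "\<forall>y\<in>topspace Y. w y \<le> 1" "w x = 1"
              "\<forall>y\<in>topspace Y. h y \<ge> 1 \<longrightarrow> w y \<le> 0"
            using bump[OF xt hx] by blast
          have "\<forall>y\<in>U. w y \<le> 0" using w(4) onU Utop by blast
          then have "w \<in> S" using w unfolding S_def S2_def by blast
          then have "w x \<le> h x" using hub by (auto simp: le_fun_def)
          then show False using w(3) hx by simp
        qed
      qed
      then show ?thesis by (simp add: le_fun_def)
    qed
    have sup: "is_sup_in (Cfun Y) S one"
      unfolding is_sup_in_def using one_C ub least by blast
    obtain T where T: "T \<subseteq> S" "countable T" "is_sup_in (Cfun Y) T one"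
      using csp sup SC zero_S unfolding countable_sup_property_def by blast
    have "\<forall>g\<in>T \<inter> S1. \<exists>Z. Z \<in> F \<and> (\<forall>x\<in>topspace Y. x \<notin> Z \<longrightarrow> g x \<le> 0)"
      unfolding S1_def by blast
    then obtain c where c: "\<And>g. g \<in> T \<inter> S1 \<Longrightarrow> c g \<in> F \<and> (\<forall>x\<in>topspace Y. x \<notin> c g \<longrightarrow> g x \<le> 0)"
      by metis
    have "countable (c ` (T \<inter> S1))" using T(2) by simp
    then have "F - c ` (T \<inter> S1) \<noteq> {}" using unc
      by (metis Diff_eq_empty_iff countable_subset)
    then obtain Zj where Zj: "Zj \<in> F" "Zj \<notin> c ` (T \<inter> S1)" by blast
    obtain f where f: "continuous_map Y euclideanreal f" "Zj = pos Y f" using F Zj by blast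
    obtain x0 where x0: "x0 \<in> Zj" using F Zj by blast
    have x0t: "x0 \<in> topspace Y" and fx0: "f x0 > 0" using x0 f by (auto simp: pos_def)
    define h where "h = extz Y (\<lambda>y. 1 - min 1 (max 0 (f y / f x0)))"
    have "continuous_map Y euclideanreal (\<lambda>y. 1 - min 1 (max 0 (f y / f x0)))"
      using f(1) fx0 by (intro continuous_intros) auto
    then have hC: "h \<in> Cfun Y" unfolding h_def by (rule extz_Cfun)
    have "g \<le> h" if g: "g \<in> T" for g
    proof -
      have "g y \<le> h y" for y
      proof (cases "y \<in> topspace Y")
        case False
        then show ?thesis using Cfun_out[of g Y y] g T(1) SC by (auto simp: h_def extz_def)
      next
        case yt: True
        show ?thesis
        proof (cases "y \<in> Zj")
          case False
          then have "f y \<le> 0" using f yt by (auto simp: pos_def)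
          then have "h y = 1" using yt fx0 by (simp add: h_def extz_def divide_le_0_iff)
          moreover have "g y \<le> 1" using g T(1) yt by (auto simp: S_def S1_def S2_def)
          ultimately show ?thesis by simp
        next
          case True
          have "h y \<ge> 0" using yt by (simp add: h_def extz_def)
          moreover have "g y \<le> 0"
          proof (cases "g \<in> S1")
            case True
            then have cg: "c g \<in> F" "\<forall>x\<in>topspace Y. x \<notin> c g \<longrightarrow> g x \<le> 0" using c g by auto
            have "c g \<noteq> Zj" using Zj g True by blast
            then have "disjnt (c g) Zj" using F cg(1) Zj(1) by (auto simp: pairwise_def)
            then have "y \<notin> c g" using \<open>y \<in> Zj\<close> by (auto simp: disjnt_def)
            then show ?thesis using cg(2) yt by blast
          next
            case False
            then have "g \<in> S2" using g T(1) by (auto simp: S_def)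
            moreover have "y \<in> U" using \<open>y \<in> Zj\<close> Zj U_def by blast
            ultimately show ?thesis by (auto simp: S2_def)
          qed
          ultimately show ?thesis by simp
        qed
      qed
      then show ?thesis by (simp add: le_fun_def)
    qed
    then have "one \<le> h" using T(3) hC unfolding is_sup_in_def by blast
    then have "one x0 \<le> h x0" by (simp add: le_fun_def)
    moreover have "h x0 = 0" using x0t fx0 by (simp add: h_def extz_def)
    moreover have "one x0 = 1" using x0t by (simp add: one_def extz_def)
    ultimately show False by simp
  qed
qed

lemma ccc_csp:
  assumes ccc: "cccpos X"
  shows "countable_sup_property (Cfun X)"
  unfolding countable_sup_property_def
proof (intro allI impI, elim conjE)
  fix S s assume SC: "S \<subseteq> Cfun X" and "S \<noteq> {}" and sup: "is_sup_in (Cfun X) S s"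
  have sC: "s \<in> Cfun X" and sub: "\<forall>g\<in>S. g \<le> s" using sup by (auto simp: is_sup_in_def)
  have sc: "continuous_map X euclideanreal s" using sC by (rule Cfun_cont)
  define e :: "nat \<Rightarrow> real" where "e n = 1 / (real n + 1)" for n
  have epos: "e n > 0" for n by (simp add: e_def)
  define P where "P n = {pos X f | f. continuous_map X euclideanreal f \<and> pos X f \<noteq> {}
       \<and> (\<exists>g\<in>S. \<forall>x\<in>pos X f. g x > s x - e n)}" for n
  have "\<exists>M. \<forall>n. M n \<subseteq> P n \<and> pairwise disjnt (M n) \<and> (\<forall>Z\<in>P n. (\<forall>W\<in>M n. disjnt Z W) \<longrightarrow> Z \<in> M n)"
    by (intro choice allI maximal_disjoint)
  then obtain M where M0: "\<forall>n. M n \<subseteq> P n \<and> pairwise disjnt (M n) \<and> (\<forall>Z\<in>P n. (\<forall>W\<in>M n. disjnt Z W) \<longrightarrow> Z \<in> M n)"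
    by (elim exE)
  have M1: "M n \<subseteq> P n" for n using M0 by simp
  have M2: "pairwise disjnt (M n)" for n using M0 by simp
  have M3: "Z \<in> M n" if "Z \<in> P n" "\<forall>W\<in>M n. disjnt Z W" for n Z using M0 that by blast
  have Mc: "countable (M n)" for n
  proof (rule ccc[unfolded cccpos_def, rule_format], intro conjI ballI)
    fix Z assume "Z \<in> M n"
    then have "Z \<in> P n" using M1 by blast
    then show "Z \<noteq> {}" "\<exists>f. continuous_map X euclideanreal f \<and> Z = pos X f"
      unfolding P_def by blast+
  next
    show "pairwise disjnt (M n)" by (rule M2)
  qed
  have ex2: "\<exists>g\<in>S. \<forall>x\<in>W. g x > s x - e n" if "W \<in> M n" for n W
  proof -
    have "W \<in> P n" using M1 that by blast
    then show ?thesis unfolding P_def by blast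
  qed
  define gs where "gs n W = (SOME g. g \<in> S \<and> (\<forall>x\<in>W. g x > s x - e n))" for n W
  have gs: "gs n W \<in> S \<and> (\<forall>x\<in>W. gs n W x > s x - e n)" if "W \<in> M n" for n W
  proof -
    have "\<exists>g. g \<in> S \<and> (\<forall>x\<in>W. g x > s x - e n)" using ex2[OF that] by blast
    then show ?thesis unfolding gs_def by (rule someI_ex)
  qed
  define T where "T = (\<lambda>(n, W). gs n W) ` (SIGMA n:UNIV. M n)"
  have TS: "T \<subseteq> S" using gs by (auto simp: T_def)
  have Tc: "countable T" unfolding T_def using Mc by (intro countable_image countable_SIGMA) auto
  have "is_sup_in (Cfun X) T s"
    unfolding is_sup_in_def
  proof (intro conjI ballI impI)
    show "s \<in> Cfun X" by (rule sC)
    show "g \<le> s" if "g \<in> T" for g using that TS sub by blast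
  next
    fix h assume hC: "h \<in> Cfun X" and hub: "\<forall>g\<in>T. g \<le> h"
    have hc: "continuous_map X euclideanreal h" using hC by (rule Cfun_cont)
    have "s x \<le> h x" for x
    proof (cases "x \<in> topspace X")
      case False then show ?thesis using Cfun_out[OF sC False] Cfun_out[OF hC False] by simp
    next
      case xt: True
      show ?thesis
      proof (rule ccontr)
        assume "\<not> s x \<le> h x"
        then have d: "s x - h x > 0" by simp
        obtain n where n: "inverse (real (Suc n)) < (s x - h x) / 2"
          using reals_Archimedean[of "(s x - h x) / 2"] d by auto
        have en: "e n < (s x - h x) / 2" using n by (simp add: e_def inverse_eq_divide add.commute)
        define z where "z y = s y - h y - e n" for y
        have zc: "continuous_map X euclideanreal z" unfolding z_def using sc hc by (intro continuous_intros)
        define Z where "Z = pos X z"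
        have c1: "disjnt Z W" if W: "W \<in> M n" for W
        proof -
          have "y \<notin> W" if "y \<in> Z" for y
          proof
            assume "y \<in> W"
            have g: "gs n W \<in> T" using W by (auto simp: T_def)
            have "gs n W y > s y - e n" using gs W \<open>y \<in> W\<close> by blast
            moreover have "s y - e n > h y" using \<open>y \<in> Z\<close> by (simp add: Z_def pos_def z_def)
            moreover have "gs n W y \<le> h y" using hub g by (auto simp: le_fun_def)
            ultimately show False by simp
          qed
          then show ?thesis by (auto simp: disjnt_def)
        qed
        have c2: "g y \<le> s y - e n" if g: "g \<in> S" and y: "y \<in> Z" for g y
        proof (rule ccontr)
          assume "\<not> g y \<le> s y - e n"
          define f where "f u = min (z u) (g u - s u + e n)" for u
          have gc: "continuous_map X euclideanreal g" using g SC Cfun_cont by blast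
          have fc: "continuous_map X euclideanreal f" unfolding f_def using zc gc sc by (intro continuous_intros)
          have yt: "y \<in> topspace X" using y by (simp add: Z_def pos_def)
          have yf: "y \<in> pos X f" using y yt \<open>\<not> g y \<le> s y - e n\<close>
            by (simp add: Z_def pos_def f_def)
          have sub: "pos X f \<subseteq> Z" by (auto simp: pos_def f_def Z_def)
          have "\<forall>u\<in>pos X f. g u > s u - e n" by (auto simp: pos_def f_def)
          then have "pos X f \<in> P n" unfolding P_def
            using fc yf g by blast
          moreover have "\<forall>W\<in>M n. disjnt (pos X f) W" using c1 sub by (meson disjnt_subset1)
          ultimately have "pos X f \<in> M n" by (rule M3)
          then have "disjnt Z (pos X f)" by (rule c1)
          then show False using yf sub by (auto simp: disjnt_def)
        qed
        define k where "k = extz X (\<lambda>y. s y - min (max (z y) 0) (e n))"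
        have "continuous_map X euclideanreal (\<lambda>y. s y - min (max (z y) 0) (e n))"
          using sc zc by (intro continuous_intros)
        then have kC: "k \<in> Cfun X" unfolding k_def by (rule extz_Cfun)
        have "g \<le> k" if g: "g \<in> S" for g
        proof -
          have "g y \<le> k y" for y
          proof (cases "y \<in> topspace X")
            case False then show ?thesis using Cfun_out[of g X y] g SC by (auto simp: k_def extz_def)
          next
            case yt: True
            have gs_le: "g y \<le> s y" using sub g by (auto simp: le_fun_def)
            show ?thesis
            proof (cases "z y > 0")
              case True
              then have "y \<in> Z" using yt by (simp add: Z_def pos_def)
              then have "g y \<le> s y - e n" using c2 g by blast
              then show ?thesis using yt by (simp add: k_def extz_def)
            next
              case False
              then show ?thesis using yt gs_le by (simp add: k_def extz_def)
            qed
          qed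
          then show ?thesis by (simp add: le_fun_def)
        qed
        then have "s \<le> k" using sup kC unfolding is_sup_in_def by blast
        then have "s x \<le> k x" by (simp add: le_fun_def)
        moreover have "k x = s x - e n" using xt en epos[of n]
          by (simp add: k_def extz_def z_def)
        ultimately show False using epos[of n] by simp
      qed
    qed
    then show "s \<le> h" by (simp add: le_fun_def)
  qed
  then show "\<exists>T\<subseteq>S. countable T \<and> is_sup_in (Cfun X) T s" using TS Tc by blast
qed

theorem corollary4p12:
  fixes X :: "'a topology" and A :: "'a set"
  assumes "A \<subseteq> topspace X"
    and "X closure_of A = topspace X"
    and "countable_sup_property (Cfun (subtopology X A))"
  shows "countable_sup_property (Cfun X)"
  using ccc_csp[OF transfer_ccc[OF assms(1,2) csp_ccc[OF assms(3)]]] .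

end
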